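(* Let $m\ge 1$, $1\le B_1\le m$, $B_2\ge 1$, and for $i\in[m]$ let $g_i:\mathbb{R}^d\to\mathbb{R}^p$ be $C_g$-Lipschitz and accessed through a stochastic oracle $g_i(\cdot;\xi)$ satisfying, for all $\mathbf{x},\mathbf{y}$ and each fresh oracle sample $\xi$: $\mathbb{E}[g_i(\mathbf{x};\xi)]=g_i(\mathbf{x})$, $\mathbb{E}\|g_i(\mathbf{x};\xi)-g_i(\mathbf{x})\|^2\le\sigma^2/B_2$, $\mathbb{E}\|g_i(\mathbf{x};\xi)-g_i(\mathbf{y};\xi)\|^2\le C_g^2\|\mathbf{x}-\mathbf{y}\|^2$. Let $(\mathbf{w}_t)$ be a sequence in $\mathbb{R}^d$ with $\mathbf{w}_{t+1},\mathbf{w}_t$ determined before iteration $t+1$. At iteration $t+1$ a subset $\mathcal{B}_1^{t+1}\subseteq[m]$ of size $B_1$ is drawn uniformly at random and for $i\in\mathcal{B}_1^{t+1}$ a fresh sample $\xi_{t+1}^i$ is drawn, independently of the past, and $$\mathbf{u}_{t+1}^i=\begin{cases}(1-\beta_{t+1})\mathbf{u}_{t}^i+\beta_{t+1} g_i(\mathbf{w}_{t+1};\xi_{t+1}^i)+\gamma_{t+1}\big(g_i(\mathbf{w}_{t+1};\xi_{t+1}^i)-g_i(\mathbf{w}_{t};\xi_{t+1}^i)\big), & i\in\mathcal{B}_1^{t+1},\\ \mathbf{u}_{t}^i, & \text{otherwise},\end{cases}$$ with $\gamma_{t+1}=\frac{m-B_1}{B_1(1-\beta_{t+1})}+(1-\beta_{t+1})$.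 If $\beta_{t+1}\le\frac12$, then $$\mathbb{E}\|\mathbf{u}_{t+1}-\mathbf{u}_t\|^2\le\frac{2B_1\beta_{t+1}^2\sigma^2}{B_2}+\frac{4B_1\beta_{t+1}^2}{m}\mathbb{E}\|\mathbf{u}_t-g(\mathbf{w}_t)\|^2+\frac{9m^2C_g^2}{B_1}\mathbb{E}\|\mathbf{w}_{t+1}-\mathbf{w}_t\|^2,$$ where $\|\mathbf{u}_{t+1}-\mathbf{u}_t\|^2=\sum_i\|\mathbf{u}_{t+1}^i-\mathbf{u}_t^i\|^2$ and $\|\mathbf{u}_t-g(\mathbf{w}_t)\|^2=\sum_i\|\mathbf{u}_t^i-g_i(\mathbf{w}_t)\|^2$.
   Context: $\mathbf{u}_t=(\mathbf{u}_t^1,\dots,\mathbf{u}_t^m)$ with $\mathbf{u}_t^i\in\mathbb{R}^p$; $g(\mathbf{w})=(g_1(\mathbf{w}),\dots,g_m(\mathbf{w}))$. *)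

theory Defs
  imports "HOL-Probability.Probability"
begin

definition gamma_par :: "nat \<Rightarrow> nat \<Rightarrow> real \<Rightarrow> real" where
  "gamma_par m B1 \<beta> = (real m - real B1) / (real B1 * (1 - \<beta>)) + (1 - \<beta>)"

definition u_next ::
  "nat \<Rightarrow> nat \<Rightarrow> real \<Rightarrow> (nat \<Rightarrow> 'd \<Rightarrow> 's \<Rightarrow> 'p::real_vector)
   \<Rightarrow> nat set \<Rightarrow> (nat \<Rightarrow> 's) \<Rightarrow> 'd \<Rightarrow> 'd \<Rightarrow> (nat \<Rightarrow> 'p) \<Rightarrow> nat \<Rightarrow> 'p" where
  "u_next m B1 \<beta> G S \<xi> w0 w1 u i =
     (if i \<in> S then
        (1 - \<beta>) *\<^sub>R u i + \<beta> *\<^sub>R G i w1 (\<xi> i)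
        + gamma_par m B1 \<beta> *\<^sub>R (G i w1 (\<xi> i) - G i w0 (\<xi> i))
      else u i)"

definition unif_subsets :: "nat \<Rightarrow> nat \<Rightarrow> nat set pmf" where
  "unif_subsets m B1 = pmf_of_set {S. S \<subseteq> {..<m} \<and> card S = B1}"

end

theory Submission
  imports Defs
begin


lemma norm_add_sq_le: "(norm (a + b :: 'p::real_inner))\<^sup>2 \<le> 2 * (norm a)\<^sup>2 + 2 * (norm b)\<^sup>2"
proof -
  have "(norm (a + b))\<^sup>2 \<le> (norm a + norm b)\<^sup>2"
    by (simp add: norm_triangle_ineq power_mono)
  also have "\<dots> \<le> 2 * (norm a)\<^sup>2 + 2 * (norm b)\<^sup>2"
    by (smt (verit) sum_squares_bound power2_sum)
  finally show ?thesis .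
qed

lemma norm_add_sq_eq: "(norm (a + b :: 'p::real_inner))\<^sup>2 = (norm a)\<^sup>2 + (norm b)\<^sup>2 + 2 * (a \<bullet> b)"
  by (simp add: power2_norm_eq_inner inner_add_left inner_add_right inner_commute)

lemma core:
  fixes M :: "'s measure" and X0 X1 :: "'s \<Rightarrow> 'p::euclidean_space"
  assumes M: "prob_space M"
    and X0m[measurable]: "X0 \<in> borel_measurable M" and X1m[measurable]: "X1 \<in> borel_measurable M"
    and X0i: "integrable M X0" and X0e: "(\<integral>\<xi>. X0 \<xi> \<partial>M) = g0"
    and var: "(\<integral>\<^sup>+\<xi>. ennreal ((norm (X0 \<xi> - g0))\<^sup>2) \<partial>M) \<le> ennreal V"
    and lipm: "(\<integral>\<^sup>+\<xi>. ennreal ((norm (X1 \<xi> - X0 \<xi>))\<^sup>2) \<partial>M) \<le> ennreal L"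
    and V: "0 \<le> V" and L: "0 \<le> L"
  shows "(\<integral>\<^sup>+\<xi>. ennreal ((norm ((1 - \<beta>) *\<^sub>R u + \<beta> *\<^sub>R X1 \<xi> + \<gamma> *\<^sub>R (X1 \<xi> - X0 \<xi>) - u))\<^sup>2) \<partial>M)
     \<le> ennreal (2 * \<beta>\<^sup>2 * (norm (u - g0))\<^sup>2 + 2 * \<beta>\<^sup>2 * V + 2 * (\<beta> + \<gamma>)\<^sup>2 * L)"
proof -
  interpret prob_space M by (rule M)
  have var_fin: "(\<integral>\<^sup>+\<xi>. ennreal (norm ((norm (X0 \<xi> - g0))\<^sup>2)) \<partial>M) < \<infinity>"
    using var by (simp add: le_less_trans)
  have ivar: "integrable M (\<lambda>\<xi>. (norm (X0 \<xi> - g0))\<^sup>2)"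
    by (rule integrableI_bounded) (use var_fin in auto)
  have Ivar: "(\<integral>\<xi>. (norm (X0 \<xi> - g0))\<^sup>2 \<partial>M) \<le> V"
  proof -
    have "ennreal (\<integral>\<xi>. (norm (X0 \<xi> - g0))\<^sup>2 \<partial>M) = (\<integral>\<^sup>+\<xi>. ennreal ((norm (X0 \<xi> - g0))\<^sup>2) \<partial>M)"
      by (rule nn_integral_eq_integral[symmetric]) (use ivar in auto)
    with var have "ennreal (\<integral>\<xi>. (norm (X0 \<xi> - g0))\<^sup>2 \<partial>M) \<le> ennreal V" by simp
    with V show ?thesis by (simp add: ennreal_le_iff)
  qed
  have id: "(norm (X0 \<xi> - u))\<^sup>2 = (norm (X0 \<xi> - g0))\<^sup>2 + (norm (g0 - u))\<^sup>2 + 2 * ((X0 \<xi> - g0) \<bullet> (g0 - u))" for \<xi>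
  proof -
    have "X0 \<xi> - u = (X0 \<xi> - g0) + (g0 - u)" by simp
    then have "(norm (X0 \<xi> - u))\<^sup>2 = (norm ((X0 \<xi> - g0) + (g0 - u)))\<^sup>2" by metis
    also have "\<dots> = (norm (X0 \<xi> - g0))\<^sup>2 + (norm (g0 - u))\<^sup>2 + 2 * ((X0 \<xi> - g0) \<bullet> (g0 - u))"
      by (rule norm_add_sq_eq)
    finally show ?thesis .
  qed
  have icross: "integrable M (\<lambda>\<xi>. (X0 \<xi> - g0) \<bullet> (g0 - u))"
    using X0i by auto
  have Icross: "(\<integral>\<xi>. (X0 \<xi> - g0) \<bullet> (g0 - u) \<partial>M) = 0"
    using X0i X0e by (simp add: prob_space)
  have i2: "integrable M (\<lambda>\<xi>. (norm (X0 \<xi> - u))\<^sup>2)"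
    unfolding id using ivar icross by auto
  have I2: "(\<integral>\<xi>. (norm (X0 \<xi> - u))\<^sup>2 \<partial>M) \<le> (norm (u - g0))\<^sup>2 + V"
  proof -
    have "(\<integral>\<xi>. (norm (X0 \<xi> - u))\<^sup>2 \<partial>M) = (\<integral>\<xi>. (norm (X0 \<xi> - g0))\<^sup>2 \<partial>M) + (norm (g0 - u))\<^sup>2 + 2 * 0"
      unfolding id using ivar icross Icross by (simp add: prob_space)
    also have "(norm (g0 - u)) = norm (u - g0)" by (rule norm_minus_commute)
    finally show ?thesis using Ivar by simp
  qed
  have N2: "(\<integral>\<^sup>+\<xi>. ennreal ((norm (X0 \<xi> - u))\<^sup>2) \<partial>M) \<le> ennreal ((norm (u - g0))\<^sup>2 + V)"
    using nn_integral_eq_integral[OF i2] I2 by (simp add: ennreal_leI)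
  have pw: "ennreal ((norm ((1 - \<beta>) *\<^sub>R u + \<beta> *\<^sub>R X1 \<xi> + \<gamma> *\<^sub>R (X1 \<xi> - X0 \<xi>) - u))\<^sup>2)
      \<le> ennreal (2 * \<beta>\<^sup>2) * ennreal ((norm (X0 \<xi> - u))\<^sup>2) + ennreal (2 * (\<beta> + \<gamma>)\<^sup>2) * ennreal ((norm (X1 \<xi> - X0 \<xi>))\<^sup>2)" for \<xi>
  proof -
    have e: "(1 - \<beta>) *\<^sub>R u + \<beta> *\<^sub>R X1 \<xi> + \<gamma> *\<^sub>R (X1 \<xi> - X0 \<xi>) - u
        = \<beta> *\<^sub>R (X0 \<xi> - u) + (\<beta> + \<gamma>) *\<^sub>R (X1 \<xi> - X0 \<xi>)"
      by (simp add: algebra_simps)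
    have "(norm (\<beta> *\<^sub>R (X0 \<xi> - u) + (\<beta> + \<gamma>) *\<^sub>R (X1 \<xi> - X0 \<xi>)))\<^sup>2
        \<le> 2 * (norm (\<beta> *\<^sub>R (X0 \<xi> - u)))\<^sup>2 + 2 * (norm ((\<beta> + \<gamma>) *\<^sub>R (X1 \<xi> - X0 \<xi>)))\<^sup>2"
      by (rule norm_add_sq_le)
    also have "\<dots> = 2 * \<beta>\<^sup>2 * (norm (X0 \<xi> - u))\<^sup>2 + 2 * (\<beta> + \<gamma>)\<^sup>2 * (norm (X1 \<xi> - X0 \<xi>))\<^sup>2"
      by (simp add: power_mult_distrib)
    finally show ?thesis unfolding e
      by (simp add: ennreal_mult'[symmetric] ennreal_plus[symmetric] del: ennreal_plus)
  qed
  have "(\<integral>\<^sup>+\<xi>. ennreal ((norm ((1 - \<beta>) *\<^sub>R u + \<beta> *\<^sub>R X1 \<xi> + \<gamma> *\<^sub>R (X1 \<xi> - X0 \<xi>) - u))\<^sup>2) \<partial>M)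
      \<le> (\<integral>\<^sup>+\<xi>. ennreal (2 * \<beta>\<^sup>2) * ennreal ((norm (X0 \<xi> - u))\<^sup>2) + ennreal (2 * (\<beta> + \<gamma>)\<^sup>2) * ennreal ((norm (X1 \<xi> - X0 \<xi>))\<^sup>2) \<partial>M)"
    by (rule nn_integral_mono) (rule pw)
  also have "\<dots> = ennreal (2 * \<beta>\<^sup>2) * (\<integral>\<^sup>+\<xi>. ennreal ((norm (X0 \<xi> - u))\<^sup>2) \<partial>M)
       + ennreal (2 * (\<beta> + \<gamma>)\<^sup>2) * (\<integral>\<^sup>+\<xi>. ennreal ((norm (X1 \<xi> - X0 \<xi>))\<^sup>2) \<partial>M)"
    by (simp add: nn_integral_add nn_integral_cmult)
  also have "\<dots> \<le> ennreal (2 * \<beta>\<^sup>2) * ennreal ((norm (u - g0))\<^sup>2 + V) + ennreal (2 * (\<beta> + \<gamma>)\<^sup>2) * ennreal L"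
    by (intro add_mono mult_left_mono N2 lipm) auto
  also have "\<dots> = ennreal (2 * \<beta>\<^sup>2 * (norm (u - g0))\<^sup>2 + 2 * \<beta>\<^sup>2 * V + 2 * (\<beta> + \<gamma>)\<^sup>2 * L)"
    using V L by (simp add: ennreal_mult'[symmetric] ennreal_plus[symmetric] algebra_simps del: ennreal_plus)
  finally show ?thesis .
qed



lemma card_subsets_containing:
  assumes "i < m" "1 \<le> B1"
  shows "card {S. S \<subseteq> {..<m} \<and> card S = B1 \<and> i \<in> S} = (m - 1) choose (B1 - 1)"
proof -
  let ?T = "{T. T \<subseteq> {..<m} - {i} \<and> card T = B1 - 1}"
  have "bij_betw (insert i) ?T {S. S \<subseteq> {..<m} \<and> card S = B1 \<and> i \<in> S}"
  proof (rule bij_betw_byWitness[where f' = "\<lambda>S. S - {i}"])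
    show "\<forall>a\<in>?T. insert i a - {i} = a" by auto
    show "\<forall>a\<in>{S. S \<subseteq> {..<m} \<and> card S = B1 \<and> i \<in> S}. insert i (a - {i}) = a" by auto
    show "insert i ` ?T \<subseteq> {S. S \<subseteq> {..<m} \<and> card S = B1 \<and> i \<in> S}"
    proof safe
      fix T assume T: "T \<subseteq> {..<m} - {i}" "card T = B1 - 1"
      then have "finite T" using finite_subset by blast
      moreover have "i \<notin> T" using T by auto
      ultimately show "card (insert i T) = B1" using T assms by simp
    qed (use assms in auto)
    show "(\<lambda>S. S - {i}) ` {S. S \<subseteq> {..<m} \<and> card S = B1 \<and> i \<in> S} \<subseteq> ?T"
    proof safe
      fix S assume S: "S \<subseteq> {..<m}" "i \<in> S"
      then have "finite S" using finite_subset by blast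
      then show "card (S - {i}) = card S - 1" using S by auto
    qed auto
  qed
  then have "card {S. S \<subseteq> {..<m} \<and> card S = B1 \<and> i \<in> S} = card ?T"
    by (simp add: bij_betw_same_card)
  also have "\<dots> = card ({..<m} - {i}) choose (B1 - 1)" by (rule n_subsets) simp
  also have "card ({..<m} - {i}) = m - 1" using assms by simp
  finally show ?thesis .
qed

lemma prob_in_subset:
  assumes "i < m" "1 \<le> B1" "B1 \<le> m"
  shows "emeasure (measure_pmf (unif_subsets m B1)) {S. i \<in> S} = ennreal (real B1 / real m)"
proof -
  let ?A = "{S. S \<subseteq> {..<m} \<and> card S = B1}"
  have fin: "finite ?A" by (rule finite_subset[of _ "Pow {..<m}"]) auto
  have ne: "?A \<noteq> {}"
  proof -
    have "{..<B1} \<in> ?A" using assms by auto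
    then show ?thesis by blast
  qed
  have cA: "card ?A = m choose B1" using n_subsets[of "{..<m}" B1] by simp
  have cAi: "card (?A \<inter> {S. i \<in> S}) = (m - 1) choose (B1 - 1)"
  proof -
    have "?A \<inter> {S. i \<in> S} = {S. S \<subseteq> {..<m} \<and> card S = B1 \<and> i \<in> S}" by blast
    then show ?thesis using card_subsets_containing[OF assms(1,2)] by simp
  qed
  have key: "real B1 * real (m choose B1) = real m * real ((m - 1) choose (B1 - 1))"
  proof -
    have "B1 * (m choose B1) = m * ((m - 1) choose (B1 - 1))"
      by (rule times_binomial_minus1_eq) (use assms in linarith)
    then show ?thesis by (metis of_nat_mult)
  qed
  have pos: "0 < m choose B1" using assms by simp
  have r: "real ((m - 1) choose (B1 - 1)) / real (m choose B1) = real B1 / real m"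
    using key pos assms by (simp add: field_simps)
  have "measure (measure_pmf (unif_subsets m B1)) {S. i \<in> S}
      = real ((m - 1) choose (B1 - 1)) / real (m choose B1)"
    unfolding unif_subsets_def using fin ne by (simp add: measure_pmf_of_set cA cAi)
  then show ?thesis using r by (simp add: measure_pmf.emeasure_eq_measure)
qed



lemma meas_G:
  assumes "(\<lambda>(x, \<xi>). G x \<xi>) \<in> borel_measurable (borel \<Otimes>\<^sub>M M)"
    and "W \<in> borel_measurable N" and "X \<in> measurable N M"
  shows "(\<lambda>p. G (W p) (X p)) \<in> borel_measurable N"
  using measurable_compose[OF measurable_Pair[OF assms(2,3)] assms(1)] by simp

lemma meas_h:
  fixes G :: "'a::topological_space \<Rightarrow> 'b \<Rightarrow> 'p::euclidean_space"
  assumes G: "(\<lambda>(x, \<xi>). G x \<xi>) \<in> borel_measurable (borel \<Otimes>\<^sub>M M)"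
    and [measurable]: "V0 \<in> borel_measurable N" "V1 \<in> borel_measurable N" "Uv \<in> borel_measurable N"
    and X: "X \<in> measurable N M"
  shows "(\<lambda>p. (norm ((1 - b) *\<^sub>R Uv p + b *\<^sub>R G (V1 p) (X p)
      + c *\<^sub>R (G (V1 p) (X p) - G (V0 p) (X p)) - Uv p))\<^sup>2) \<in> borel_measurable N"
proof -
  have [measurable]: "(\<lambda>p. G (V1 p) (X p)) \<in> borel_measurable N" "(\<lambda>p. G (V0 p) (X p)) \<in> borel_measurable N"
    by (rule meas_G[OF G], measurable, rule X)+
  show ?thesis by measurable
qed

theorem lemma6:
  fixes m B1 B2 :: nat
    and \<beta> \<sigma> Cg :: real
    and g :: "nat \<Rightarrow> 'd::euclidean_space \<Rightarrow> 'p::euclidean_space"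
    and G :: "nat \<Rightarrow> 'd \<Rightarrow> 's \<Rightarrow> 'p"
    and D :: "nat \<Rightarrow> 's measure"
    and P :: "'o measure"
    and W0 W1 :: "'o \<Rightarrow> 'd"
    and U :: "'o \<Rightarrow> nat \<Rightarrow> 'p"
  assumes m: "1 \<le> m" and B1: "1 \<le> B1" "B1 \<le> m" and B2: "1 \<le> B2"
    and beta: "0 \<le> \<beta>" "\<beta> \<le> 1/2"
    and lip: "\<And>i. i < m \<Longrightarrow> Cg-lipschitz_on UNIV (g i)"
    and D_prob: "\<And>i. i < m \<Longrightarrow> prob_space (D i)"
    and G_meas: "\<And>i. i < m \<Longrightarrow> (\<lambda>(x, \<xi>). G i x \<xi>) \<in> borel_measurable (borel \<Otimes>\<^sub>M D i)"
    and unbiased_int: "\<And>i x. i < m \<Longrightarrow> integrable (D i) (G i x)"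
    and unbiased: "\<And>i x. i < m \<Longrightarrow> (\<integral>\<xi>. G i x \<xi> \<partial>D i) = g i x"
    and variance: "\<And>i x. i < m \<Longrightarrow>
        (\<integral>\<^sup>+\<xi>. ennreal ((norm (G i x \<xi> - g i x))\<^sup>2) \<partial>D i) \<le> ennreal (\<sigma>\<^sup>2 / real B2)"
    and ms_lip: "\<And>i x y. i < m \<Longrightarrow>
        (\<integral>\<^sup>+\<xi>. ennreal ((norm (G i x \<xi> - G i y \<xi>))\<^sup>2) \<partial>D i) \<le> ennreal (Cg\<^sup>2 * (norm (x - y))\<^sup>2)"
    and P_prob: "prob_space P"
    and W0_meas: "W0 \<in> borel_measurable P"
    and W1_meas: "W1 \<in> borel_measurable P"
    and U_meas: "\<And>i. i < m \<Longrightarrow> (\<lambda>\<omega>. U \<omega> i) \<in> borel_measurable P"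
  shows
    "(\<integral>\<^sup>+(\<omega>, S, \<xi>). ennreal (\<Sum>i<m. (norm (u_next m B1 \<beta> G S \<xi> (W0 \<omega>) (W1 \<omega>) (U \<omega>) i - U \<omega> i))\<^sup>2)
        \<partial>(P \<Otimes>\<^sub>M (measure_pmf (unif_subsets m B1) \<Otimes>\<^sub>M (\<Pi>\<^sub>M i\<in>{..<m}. D i))))
     \<le> ennreal (2 * real B1 * \<beta>\<^sup>2 * \<sigma>\<^sup>2 / real B2)
       + ennreal (4 * real B1 * \<beta>\<^sup>2 / real m)
           * (\<integral>\<^sup>+\<omega>. ennreal (\<Sum>i<m. (norm (U \<omega> i - g i (W0 \<omega>)))\<^sup>2) \<partial>P)
       + ennreal (9 * (real m)\<^sup>2 * Cg\<^sup>2 / real B1)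
           * (\<integral>\<^sup>+\<omega>. ennreal ((norm (W1 \<omega> - W0 \<omega>))\<^sup>2) \<partial>P)"
proof -
  define Q where "Q = measure_pmf (unif_subsets m B1)"
  define PM where "PM = (\<Pi>\<^sub>M i\<in>{..<m}. D i)"
  define \<gamma> where "\<gamma> = gamma_par m B1 \<beta>"
  define h where "h i \<omega> x = (norm ((1 - \<beta>) *\<^sub>R U \<omega> i + \<beta> *\<^sub>R G i (W1 \<omega>) x
      + \<gamma> *\<^sub>R (G i (W1 \<omega>) x - G i (W0 \<omega>) x) - U \<omega> i))\<^sup>2" for i \<omega> x
  define bnd where "bnd i \<omega> = 2 * \<beta>\<^sup>2 * (norm (U \<omega> i - g i (W0 \<omega>)))\<^sup>2 + 2 * \<beta>\<^sup>2 * (\<sigma>\<^sup>2 / real B2)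
      + 2 * (\<beta> + \<gamma>)\<^sup>2 * (Cg\<^sup>2 * (norm (W1 \<omega> - W0 \<omega>))\<^sup>2)" for i \<omega>
  define T where "T i = (\<lambda>(\<omega>, S, \<xi>). if i \<in> S then ennreal (h i \<omega> (\<xi> i)) else 0)" for i
  interpret P: prob_space P by (rule P_prob)
  have PiP: "prob_space PM" unfolding PM_def by (rule prob_space_PiM) (use D_prob in auto)
  interpret PM: prob_space PM by (rule PiP)
  have QP: "prob_space (Q \<Otimes>\<^sub>M PM)" unfolding Q_def
    by (intro prob_space_pair prob_space_measure_pmf PiP)
  interpret QPi: prob_space "Q \<Otimes>\<^sub>M PM" by (rule QP)
  have gm: "g i \<in> borel_measurable borel" if "i < m" for i
    by (rule borel_measurable_continuous_onI) (rule lipschitz_on_continuous_on[OF lip[OF that]])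
  have A: "(\<lambda>(\<omega>, S, \<xi>). ennreal (\<Sum>i<m. (norm (u_next m B1 \<beta> G S \<xi> (W0 \<omega>) (W1 \<omega>) (U \<omega>) i - U \<omega> i))\<^sup>2))
      = (\<lambda>p. \<Sum>i<m. T i p)"
  proof (rule ext, clarify)
    fix \<omega> S \<xi>
    have "ennreal (\<Sum>i<m. (norm (u_next m B1 \<beta> G S \<xi> (W0 \<omega>) (W1 \<omega>) (U \<omega>) i - U \<omega> i))\<^sup>2)
        = (\<Sum>i<m. ennreal ((norm (u_next m B1 \<beta> G S \<xi> (W0 \<omega>) (W1 \<omega>) (U \<omega>) i - U \<omega> i))\<^sup>2))"
      by (rule sum_ennreal[symmetric]) simp
    also have "\<dots> = (\<Sum>i<m. T i (\<omega>, S, \<xi>))"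
      by (intro sum.cong refl) (simp add: T_def h_def u_next_def \<gamma>_def)
    finally show "ennreal (\<Sum>i<m. (norm (u_next m B1 \<beta> G S \<xi> (W0 \<omega>) (W1 \<omega>) (U \<omega>) i - U \<omega> i))\<^sup>2)
        = (\<Sum>i<m. T i (\<omega>, S, \<xi>))" .
  qed
  have Tm: "T i \<in> borel_measurable (P \<Otimes>\<^sub>M (Q \<Otimes>\<^sub>M PM))" if i: "i < m" for i
  proof -
    have [measurable]: "(\<lambda>p. h i (fst p) (snd (snd p) i)) \<in> borel_measurable (P \<Otimes>\<^sub>M (Q \<Otimes>\<^sub>M PM))"
      unfolding h_def
      by (rule meas_h[OF G_meas[OF i]]) (use i W0_meas W1_meas U_meas[OF i] in \<open>unfold PM_def, measurable\<close>)
    have [measurable]: "Measurable.pred (P \<Otimes>\<^sub>M (Q \<Otimes>\<^sub>M PM)) (\<lambda>p. i \<in> fst (snd p))"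
    proof -
      have "(\<lambda>S. i \<in> S) \<in> measurable Q (count_space UNIV)" unfolding Q_def by simp
      then show ?thesis by measurable
    qed
    have "T i = (\<lambda>p. if i \<in> fst (snd p) then ennreal (h i (fst p) (snd (snd p) i)) else 0)"
      unfolding T_def by (auto simp: fun_eq_iff)
    then show ?thesis by simp
  qed
  have hD: "(\<lambda>x. h i \<omega> x) \<in> borel_measurable (D i)" if i: "i < m" for i \<omega>
    unfolding h_def by (rule meas_h[OF G_meas[OF i]]) auto
  have hPM: "(\<lambda>\<xi>. h i \<omega> (\<xi> i)) \<in> borel_measurable PM" if i: "i < m" for i \<omega>
    unfolding h_def by (rule meas_h[OF G_meas[OF i]]) (use i in \<open>auto simp: PM_def\<close>)
  have Tinner: "(\<integral>\<^sup>+q. T i (\<omega>, q) \<partial>(Q \<Otimes>\<^sub>M PM)) \<le> ennreal (real B1 / real m * bnd i \<omega>)"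
    if i: "i < m" and om: "\<omega> \<in> space P" for i \<omega>
  proof -
    have Tqm: "(\<lambda>q. T i (\<omega>, q)) \<in> borel_measurable (Q \<Otimes>\<^sub>M PM)"
      using measurable_Pair2[OF Tm[OF i] om] by simp
    define K where "K = (\<integral>\<^sup>+\<xi>. ennreal (h i \<omega> (\<xi> i)) \<partial>PM)"
    have "(\<integral>\<^sup>+q. T i (\<omega>, q) \<partial>(Q \<Otimes>\<^sub>M PM)) = (\<integral>\<^sup>+S. \<integral>\<^sup>+\<xi>. T i (\<omega>, S, \<xi>) \<partial>PM \<partial>Q)"
      using PM.nn_integral_fst[OF Tqm] by simp
    also have "\<dots> = (\<integral>\<^sup>+S. K * indicator {S. i \<in> S} S \<partial>Q)"
      by (intro nn_integral_cong) (simp add: T_def K_def indicator_def)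
    also have "\<dots> = K * emeasure Q {S. i \<in> S}"
      by (subst nn_integral_cmult) (auto simp: Q_def)
    also have "\<dots> = K * ennreal (real B1 / real m)"
      unfolding Q_def using prob_in_subset[OF i B1] by simp
    also have "K \<le> ennreal (bnd i \<omega>)"
    proof -
      have "K = (\<integral>\<^sup>+x. ennreal (h i \<omega> x) \<partial>distr PM (D i) (\<lambda>\<xi>. \<xi> i))"
        unfolding K_def by (subst nn_integral_distr) (use hD[OF i] i in \<open>auto simp: PM_def\<close>)
      also have "distr PM (D i) (\<lambda>\<xi>. \<xi> i) = D i"
        unfolding PM_def by (rule distr_PiM_component) (use D_prob i in auto)
      also have "(\<integral>\<^sup>+x. ennreal (h i \<omega> x) \<partial>D i) \<le> ennreal (bnd i \<omega>)"
        unfolding h_def bnd_def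
        by (rule core[OF D_prob[OF i] _ _ unbiased_int[OF i] unbiased[OF i] variance[OF i] ms_lip[OF i]])
           (use hD[OF i] G_meas[OF i] in \<open>auto intro: meas_G\<close>)
      finally show ?thesis .
    qed
    finally have "(\<integral>\<^sup>+q. T i (\<omega>, q) \<partial>(Q \<Otimes>\<^sub>M PM)) \<le> ennreal (bnd i \<omega>) * ennreal (real B1 / real m)"
      by (simp add: mult_right_mono)
    also have "\<dots> = ennreal (real B1 / real m * bnd i \<omega>)"
      by (subst ennreal_mult[symmetric]) (auto simp: bnd_def)
    finally show ?thesis .
  qed
  define SA where "SA \<omega> = (\<Sum>i<m. (norm (U \<omega> i - g i (W0 \<omega>)))\<^sup>2)" for \<omega>
  define dd where "dd \<omega> = (norm (W1 \<omega> - W0 \<omega>))\<^sup>2" for \<omega>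
  define K0 where "K0 = 2 * real B1 * \<beta>\<^sup>2 * \<sigma>\<^sup>2 / real B2"
  define K1 where "K1 = 4 * real B1 * \<beta>\<^sup>2 / real m"
  define K2 where "K2 = 9 * (real m)\<^sup>2 * Cg\<^sup>2 / real B1"
  have [measurable]: "W0 \<in> borel_measurable P" "W1 \<in> borel_measurable P" by (rule W0_meas, rule W1_meas)
  have bm: "(\<lambda>\<omega>. ennreal (real B1 / real m * bnd i \<omega>)) \<in> borel_measurable P" if i: "i < m" for i
  proof -
    have [measurable]: "g i \<in> borel_measurable borel" "(\<lambda>\<omega>. U \<omega> i) \<in> borel_measurable P"
      by (rule gm[OF i], rule U_meas[OF i])
    show ?thesis unfolding bnd_def by measurable
  qed
  have SAm: "(\<lambda>\<omega>. ennreal (SA \<omega>)) \<in> borel_measurable P"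
  proof -
    have [measurable]: "g i \<in> borel_measurable borel" "(\<lambda>\<omega>. U \<omega> i) \<in> borel_measurable P" if "i < m" for i
      by (rule gm[OF that], rule U_meas[OF that])
    have "(\<lambda>\<omega>. SA \<omega>) \<in> borel_measurable P"
      unfolding SA_def by (rule borel_measurable_sum) measurable
    then show ?thesis by measurable
  qed
  have ddm: "(\<lambda>\<omega>. ennreal (dd \<omega>)) \<in> borel_measurable P" unfolding dd_def by measurable
  have c_bnd: "2 * real B1 * (\<beta> + \<gamma>)\<^sup>2 \<le> 9 * (real m)\<^sup>2 / real B1"
  proof -
    define x where "x = (real m - real B1) / real B1"
    have B1p: "0 < real B1" using B1 by simp
    have x0: "0 \<le> x" unfolding x_def using B1 by simp
    have c_eq: "\<beta> + \<gamma> = x / (1 - \<beta>) + 1"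
      unfolding \<gamma>_def gamma_par_def x_def using beta by (simp add: field_simps)
    have "0 \<le> x * (1 - 2 * \<beta>)" using x0 beta by simp
    then have "x \<le> 2 * x * (1 - \<beta>)" by (simp add: algebra_simps)
    then have "x / (1 - \<beta>) \<le> 2 * x"
      using beta by (simp add: divide_le_eq)
    then have c_le: "\<beta> + \<gamma> \<le> 2 * real m / real B1"
      unfolding c_eq x_def using B1p by (simp add: field_simps)
    have c_ge: "0 \<le> \<beta> + \<gamma>" unfolding c_eq using x0 beta by simp
    have "(\<beta> + \<gamma>)\<^sup>2 \<le> (2 * real m / real B1)\<^sup>2"
      by (rule power_mono[OF c_le c_ge])
    then have "2 * real B1 * (\<beta> + \<gamma>)\<^sup>2 \<le> 2 * real B1 * (2 * real m / real B1)\<^sup>2"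
      using B1p by simp
    also have "\<dots> = 8 * (real m)\<^sup>2 / real B1"
      using B1p by (simp add: power2_eq_square field_simps)
    also have "\<dots> \<le> 9 * (real m)\<^sup>2 / real B1"
      using B1p by (simp add: divide_right_mono)
    finally show ?thesis .
  qed
  have pw: "(\<Sum>i<m. real B1 / real m * bnd i \<omega>) \<le> K0 + K1 * SA \<omega> + K2 * dd \<omega>" for \<omega>
  proof -
    have mp: "0 < real m" using m by simp
    have "(\<Sum>i<m. real B1 / real m * bnd i \<omega>)
        = real B1 / real m * (2 * \<beta>\<^sup>2 * SA \<omega> + real m * (2 * \<beta>\<^sup>2 * (\<sigma>\<^sup>2 / real B2))
           + real m * (2 * (\<beta> + \<gamma>)\<^sup>2 * (Cg\<^sup>2 * dd \<omega>)))"
      unfolding sum_distrib_left[symmetric]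
      by (simp add: bnd_def SA_def dd_def sum.distrib sum_distrib_left)
    also have "\<dots> = 2 * real B1 * \<beta>\<^sup>2 / real m * SA \<omega> + K0 + (2 * real B1 * (\<beta> + \<gamma>)\<^sup>2) * (Cg\<^sup>2 * dd \<omega>)"
      using mp unfolding K0_def by (simp add: field_simps)
    also have "\<dots> \<le> K1 * SA \<omega> + K0 + (9 * (real m)\<^sup>2 / real B1) * (Cg\<^sup>2 * dd \<omega>)"
    proof (intro add_mono mult_right_mono c_bnd)
      show "2 * real B1 * \<beta>\<^sup>2 / real m \<le> K1" unfolding K1_def using mp
        by (simp add: divide_right_mono)
      show "0 \<le> SA \<omega>" unfolding SA_def by (simp add: sum_nonneg)
    qed (auto simp: dd_def)
    finally show ?thesis unfolding K2_def by (simp add: algebra_simps)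
  qed
  have K_nn: "0 \<le> K0" "0 \<le> K1" "0 \<le> K2" unfolding K0_def K1_def K2_def by auto
  have "(\<integral>\<^sup>+(\<omega>, S, \<xi>). ennreal (\<Sum>i<m. (norm (u_next m B1 \<beta> G S \<xi> (W0 \<omega>) (W1 \<omega>) (U \<omega>) i - U \<omega> i))\<^sup>2)
        \<partial>(P \<Otimes>\<^sub>M (Q \<Otimes>\<^sub>M PM))) = (\<integral>\<^sup>+p. (\<Sum>i<m. T i p) \<partial>(P \<Otimes>\<^sub>M (Q \<Otimes>\<^sub>M PM)))"
    by (simp only: A)
  also have "\<dots> = (\<Sum>i<m. \<integral>\<^sup>+p. T i p \<partial>(P \<Otimes>\<^sub>M (Q \<Otimes>\<^sub>M PM)))"
    by (rule nn_integral_sum) (use Tm in auto)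
  also have "\<dots> \<le> (\<Sum>i<m. \<integral>\<^sup>+\<omega>. ennreal (real B1 / real m * bnd i \<omega>) \<partial>P)"
  proof (rule sum_mono)
    fix i assume "i \<in> {..<m}"
    then have i: "i < m" by simp
    have "(\<integral>\<^sup>+p. T i p \<partial>(P \<Otimes>\<^sub>M (Q \<Otimes>\<^sub>M PM))) = (\<integral>\<^sup>+\<omega>. \<integral>\<^sup>+q. T i (\<omega>, q) \<partial>(Q \<Otimes>\<^sub>M PM) \<partial>P)"
      using QPi.nn_integral_fst[OF Tm[OF i]] by simp
    also have "\<dots> \<le> (\<integral>\<^sup>+\<omega>. ennreal (real B1 / real m * bnd i \<omega>) \<partial>P)"
      by (rule nn_integral_mono) (rule Tinner[OF i])
    finally show "(\<integral>\<^sup>+p. T i p \<partial>(P \<Otimes>\<^sub>M (Q \<Otimes>\<^sub>M PM))) \<le> (\<integral>\<^sup>+\<omega>. ennreal (real B1 / real m * bnd i \<omega>) \<partial>P)" .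
  qed
  also have "\<dots> = (\<integral>\<^sup>+\<omega>. (\<Sum>i<m. ennreal (real B1 / real m * bnd i \<omega>)) \<partial>P)"
    by (rule nn_integral_sum[symmetric]) (use bm in auto)
  also have "\<dots> \<le> (\<integral>\<^sup>+\<omega>. ennreal K0 + ennreal K1 * ennreal (SA \<omega>) + ennreal K2 * ennreal (dd \<omega>) \<partial>P)"
  proof (rule nn_integral_mono)
    fix \<omega>
    have "(\<Sum>i<m. ennreal (real B1 / real m * bnd i \<omega>)) = ennreal (\<Sum>i<m. real B1 / real m * bnd i \<omega>)"
      by (rule sum_ennreal) (auto simp: bnd_def)
    also have "\<dots> \<le> ennreal (K0 + K1 * SA \<omega> + K2 * dd \<omega>)"
      by (rule ennreal_leI) (rule pw)
    also have "\<dots> = ennreal K0 + ennreal K1 * ennreal (SA \<omega>) + ennreal K2 * ennreal (dd \<omega>)"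
      using K_nn by (simp add: ennreal_mult ennreal_plus SA_def dd_def sum_nonneg)
    finally show "(\<Sum>i<m. ennreal (real B1 / real m * bnd i \<omega>)) \<le> ennreal K0 + ennreal K1 * ennreal (SA \<omega>) + ennreal K2 * ennreal (dd \<omega>)" .
  qed
  also have "\<dots> = ennreal K0 + ennreal K1 * (\<integral>\<^sup>+\<omega>. ennreal (SA \<omega>) \<partial>P) + ennreal K2 * (\<integral>\<^sup>+\<omega>. ennreal (dd \<omega>) \<partial>P)"
    using SAm ddm by (simp add: nn_integral_add nn_integral_cmult P.emeasure_space_1)
  finally show ?thesis unfolding Q_def PM_def K0_def K1_def K2_def SA_def dd_def .
qed

end
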